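(* Let $n\ge 2$, $t\ge 2$. Every $\mathbb{F}_q$-linear set $L$ of $\Lambda=PG(V,\mathbb{F}_{q^t})=PG(2n-1,q^t)$ of pseudoregulus type is of the form $L_{\rho,f}$; that is, there exist a decomposition $V=U_1\oplus U_2$ with $\dim U_1=\dim U_2=n$, an invertible semilinear map $f:U_1\to U_2$ whose companion automorphism $\sigma$ satisfies $\mathrm{Fix}(\sigma)=\mathbb{F}_q$, and $\rho\in\mathbb{F}_{q^t}^*$, such that $L=\{\langle\mathbf u+\rho f(\mathbf u)\rangle_{q^t}:\mathbf u\in U_1\setminus\{\mathbf 0\}\}$.
   Context: For an $\mathbb{F}_q$-subspace $U$ of $V$, $L_U=\{\langle\mathbf u\rangle_{q^t}:\mathbf u\in U\setminus\{\mathbf 0\}\}$ is the $\mathbb{F}_q$-linear set defined by $U$, of rank $\dim_{\mathbb F_q}U$; the weight of a subspace $PG(W,\mathbb{F}_{q^t})$ in $L_U$ is $\dim_{\mathbb F_q}(W\cap U)$; $L_U$ is scattered if every point has weight 1. A semilinear map $f$ with companion automorphism $\sigma$ is additive with $f(\lambda\mathbf u)=\lambda^\sigma f(\mathbf u)$. Pseudoregulus type: for $t,n\ge 2$, a scattered $\mathbb{F}_q$-linear set $L=L_U$ of $PG(2n-1,q^t)$ of rank $tn$ is of pseudoregulus type if (i) there exist $(q^{nt}-1)/(q^t-1)$ pairwise disjoint lines $s_i$ each of weight $t$ in $L$, and (ii) there exist exactly two $(n-1)$-dimensional subspaces $T_1,T_2$ disjoint from $L$ with $T_j\cap s_i\ne\emptyset$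 for all $i,j$. *)

theory Defs
  imports Main
begin

text \<open>Vectors of V = F^N (F = 'a, the field F_{q^t}) are functions nat => 'a vanishing at
  indices >= N.  Subspaces (over a subfield K, or over F itself with K = UNIV) are sets of
  such vectors.\<close>

definition vzero :: "nat \<Rightarrow> 'a::field" where
  "vzero = (\<lambda>_. 0)"

definition vadd :: "(nat \<Rightarrow> 'a::field) \<Rightarrow> (nat \<Rightarrow> 'a) \<Rightarrow> (nat \<Rightarrow> 'a)" where
  "vadd u v = (\<lambda>i. u i + v i)"

definition vsm :: "'a::field \<Rightarrow> (nat \<Rightarrow> 'a) \<Rightarrow> (nat \<Rightarrow> 'a)" where
  "vsm c v = (\<lambda>i. c * v i)"

definition ambient :: "nat \<Rightarrow> (nat \<Rightarrow> 'a::field) set" where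
  "ambient N = {v. \<forall>i\<ge>N. v i = 0}"

definition is_subfield :: "'a::field set \<Rightarrow> bool" where
  "is_subfield K \<longleftrightarrow> 0 \<in> K \<and> 1 \<in> K \<and>
     (\<forall>x\<in>K. \<forall>y\<in>K. x + y \<in> K \<and> x * y \<in> K) \<and>
     (\<forall>x\<in>K. - x \<in> K) \<and> (\<forall>x\<in>K. x \<noteq> 0 \<longrightarrow> inverse x \<in> K)"

definition field_automorphism :: "('a::field \<Rightarrow> 'a) \<Rightarrow> bool" where
  "field_automorphism \<sigma> \<longleftrightarrow> bij \<sigma> \<and>
     (\<forall>x y. \<sigma> (x + y) = \<sigma> x + \<sigma> y) \<and> (\<forall>x y. \<sigma> (x * y) = \<sigma> x * \<sigma> y)"

definition subspace_over :: "'a::field set \<Rightarrow> (nat \<Rightarrow> 'a) set \<Rightarrow> bool" where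
  "subspace_over K U \<longleftrightarrow> vzero \<in> U \<and> (\<forall>u\<in>U. \<forall>v\<in>U. vadd u v \<in> U) \<and>
     (\<forall>c\<in>K. \<forall>u\<in>U. vsm c u \<in> U)"

definition lin_comb :: "((nat \<Rightarrow> 'a::field) \<Rightarrow> 'a) \<Rightarrow> (nat \<Rightarrow> 'a) set \<Rightarrow> (nat \<Rightarrow> 'a)" where
  "lin_comb c B = (\<lambda>i. \<Sum>b\<in>B. c b * b i)"

definition span_over :: "'a::field set \<Rightarrow> (nat \<Rightarrow> 'a) set \<Rightarrow> (nat \<Rightarrow> 'a) set" where
  "span_over K B = {lin_comb c B | c. \<forall>b\<in>B. c b \<in> K}"

definition indep_over :: "'a::field set \<Rightarrow> (nat \<Rightarrow> 'a) set \<Rightarrow> bool" where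
  "indep_over K B \<longleftrightarrow> (\<forall>c. (\<forall>b\<in>B. c b \<in> K) \<and> lin_comb c B = vzero \<longrightarrow> (\<forall>b\<in>B. c b = 0))"

definition has_dim :: "'a::field set \<Rightarrow> (nat \<Rightarrow> 'a) set \<Rightarrow> nat \<Rightarrow> bool" where
  "has_dim K U k \<longleftrightarrow> (\<exists>B. finite B \<and> card B = k \<and> B \<subseteq> U \<and> indep_over K B \<and> span_over K B = U)"

text \<open>The projective point <u>_{q^t}, represented by the 1-dimensional F-subspace spanned by u.\<close>
definition point :: "(nat \<Rightarrow> 'a::field) \<Rightarrow> (nat \<Rightarrow> 'a) set" where
  "point u = {vsm c u | c. True}"

definition linear_set :: "(nat \<Rightarrow> 'a::field) set \<Rightarrow> (nat \<Rightarrow> 'a) set set" where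
  "linear_set U = {point u | u. u \<in> U \<and> u \<noteq> vzero}"

text \<open>Weight of the projective subspace PG(W) in L_U is dim_K (W \<inter> U); L_U scattered:
  every point has weight 1.\<close>
definition scattered :: "'a::field set \<Rightarrow> (nat \<Rightarrow> 'a) set \<Rightarrow> bool" where
  "scattered K U \<longleftrightarrow> (\<forall>u\<in>U. u \<noteq> vzero \<longrightarrow> has_dim K (point u \<inter> U) 1)"

text \<open>Lines are 2-dimensional F-subspaces, (n-1)-dimensional projective subspaces are
  n-dimensional F-subspaces; projective disjointness means vector intersection {0}.\<close>
definition pseudoregulus_type :: "'a::field set \<Rightarrow> nat \<Rightarrow> nat \<Rightarrow> (nat \<Rightarrow> 'a) set \<Rightarrow> bool" where
  "pseudoregulus_type K n t U \<longleftrightarrow>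
     t \<ge> 2 \<and> n \<ge> 2 \<and>
     U \<subseteq> ambient (2*n) \<and> subspace_over K U \<and> has_dim K U (t*n) \<and> scattered K U \<and>
     (\<exists>S. card S = (card K ^ (n*t) - 1) div (card K ^ t - 1) \<and>
        (\<forall>s\<in>S. s \<subseteq> ambient (2*n) \<and> subspace_over UNIV s \<and> has_dim UNIV s 2
                 \<and> has_dim K (s \<inter> U) t) \<and>
        (\<forall>s\<in>S. \<forall>s'\<in>S. s \<noteq> s' \<longrightarrow> s \<inter> s' = {vzero}) \<and>
        card {T. T \<subseteq> ambient (2*n) \<and> subspace_over UNIV T \<and> has_dim UNIV T n \<and>
                 (\<forall>P\<in>linear_set U. \<not> P \<subseteq> T) \<and>
                 (\<forall>s\<in>S. T \<inter> s \<noteq> {vzero})} = 2)"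

definition semilinear_on :: "(nat \<Rightarrow> 'a::field) set \<Rightarrow> ((nat \<Rightarrow> 'a) \<Rightarrow> (nat \<Rightarrow> 'a)) \<Rightarrow> ('a \<Rightarrow> 'a) \<Rightarrow> bool" where
  "semilinear_on U1 f \<sigma> \<longleftrightarrow> field_automorphism \<sigma> \<and>
     (\<forall>u\<in>U1. \<forall>v\<in>U1. f (vadd u v) = vadd (f u) (f v)) \<and>
     (\<forall>c. \<forall>u\<in>U1. f (vsm c u) = vsm (\<sigma> c) (f u))"

end

theory Submission
  imports Defs "HOL-Library.Function_Algebras" "HOL-Library.FuncSet"
begin


lemma vadd_eq[simp]: "vadd u v = u + v" by (simp add: vadd_def plus_fun_def)
lemma vzero_eq[simp]: "vzero = (0::nat\<Rightarrow>'a::field)" by (simp add: vzero_def zero_fun_def)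

lemma vsm_add1: "vsm (a+b) v = vsm a v + vsm b v" by (simp add: vsm_def plus_fun_def algebra_simps)
lemma vsm_add2: "vsm a (u+v) = vsm a u + vsm a v" by (simp add: vsm_def plus_fun_def algebra_simps)
lemma vsm_diff2: "vsm a (u-v) = vsm a u - vsm a v" by (simp add: vsm_def fun_eq_iff algebra_simps)
lemma vsm_diff1: "vsm (a-b) v = vsm a v - vsm b v" by (simp add: vsm_def fun_eq_iff algebra_simps)
lemma vsm_assoc: "vsm a (vsm b v) = vsm (a*b) v" by (simp add: vsm_def algebra_simps)
lemma vsm_one[simp]: "vsm 1 v = v" by (simp add: vsm_def)
lemma vsm_zero1[simp]: "vsm 0 v = 0" by (simp add: vsm_def zero_fun_def)
lemma vsm_zero2[simp]: "vsm a 0 = 0" by (simp add: vsm_def zero_fun_def)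
lemma vsm_neg: "vsm (-1) v = - v" by (simp add: vsm_def fun_eq_iff)
lemma vsm_eq_0: "vsm a v = 0 \<longleftrightarrow> a = 0 \<or> v = (0::nat\<Rightarrow>'a::field)"
  by (auto simp: vsm_def fun_eq_iff)
lemma vsm_cancel: "vsm a v = vsm b v \<Longrightarrow> v \<noteq> 0 \<Longrightarrow> a = (b::'a::field)"
  using vsm_eq_0[of "a-b" v] by (simp add: vsm_diff1)
lemma vsm_inj: "vsm a u = vsm a v \<Longrightarrow> a \<noteq> 0 \<Longrightarrow> u = (v::nat\<Rightarrow>'a::field)"
  using vsm_eq_0[of a "u-v"] by (simp add: vsm_diff2)

lemma subfield_UNIV: "is_subfield (UNIV::'a::field set)" by (simp add: is_subfield_def)

lemma subf_diff: "is_subfield K \<Longrightarrow> x \<in> K \<Longrightarrow> y \<in> K \<Longrightarrow> x - y \<in> K"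
  unfolding is_subfield_def by (metis diff_conv_add_uminus)
lemma subf_div: "is_subfield K \<Longrightarrow> x \<in> K \<Longrightarrow> y \<in> K \<Longrightarrow> x / y \<in> K"
  unfolding is_subfield_def by (metis divide_inverse inverse_zero)

lemma sub_zero: "subspace_over K W \<Longrightarrow> 0 \<in> W" by (simp add: subspace_over_def)
lemma sub_add: "subspace_over K W \<Longrightarrow> u \<in> W \<Longrightarrow> v \<in> W \<Longrightarrow> u + v \<in> W"
  by (simp add: subspace_over_def)
lemma sub_sm: "subspace_over K W \<Longrightarrow> c \<in> K \<Longrightarrow> u \<in> W \<Longrightarrow> vsm c u \<in> W"
  by (simp add: subspace_over_def)
lemma sub_smU: "subspace_over UNIV W \<Longrightarrow> u \<in> W \<Longrightarrow> vsm c u \<in> W"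
  by (simp add: subspace_over_def)
lemma sub_neg: "subspace_over K W \<Longrightarrow> is_subfield K \<Longrightarrow> u \<in> W \<Longrightarrow> - u \<in> W"
  by (metis sub_sm vsm_neg is_subfield_def)
lemma sub_diff: "subspace_over K W \<Longrightarrow> is_subfield K \<Longrightarrow> u \<in> W \<Longrightarrow> v \<in> W \<Longrightarrow> u - v \<in> W"
  by (metis sub_add sub_neg diff_conv_add_uminus)

lemma point_mem: "w \<in> point u \<longleftrightarrow> (\<exists>c. w = vsm c u)" by (auto simp: point_def)
lemma point_self: "u \<in> point u" unfolding point_mem by (metis vsm_one)
lemma point_sub: "subspace_over UNIV W \<Longrightarrow> u \<in> W \<Longrightarrow> point u \<subseteq> W"
  by (auto simp: point_mem sub_smU)

lemma card_point:
  assumes "u \<noteq> (0::nat\<Rightarrow>'a::{field,finite})" shows "card (point u) = card (UNIV::'a set)"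
proof -
  have "point u = (\<lambda>c. vsm c u) ` UNIV" by (auto simp: point_def)
  moreover have "inj (\<lambda>c. vsm c u)" using assms by (auto intro: injI vsm_cancel)
  ultimately show ?thesis by (simp add: card_image)
qed

lemma card_has_dim:
  fixes W :: "(nat \<Rightarrow> 'a::{field,finite}) set"
  assumes "is_subfield K" "has_dim K W k"
  shows "card W = card K ^ k"
proof -
  obtain B where B: "finite B" "card B = k" "B \<subseteq> W" "indep_over K B" "span_over K B = W"
    using assms(2) unfolding has_dim_def by blast
  define P :: "((nat\<Rightarrow>'a)\<Rightarrow>'a) set" where "P = PiE B (\<lambda>_. K)"
  have img: "W = (\<lambda>c. lin_comb c B) ` P"
  proof
    show "(\<lambda>c. lin_comb c B) ` P \<subseteq> W" using B(5) unfolding P_def span_over_def by (auto simp: PiE_iff)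
    show "W \<subseteq> (\<lambda>c. lin_comb c B) ` P"
    proof
      fix w assume "w \<in> W"
      then obtain c where c: "w = lin_comb c B" "\<forall>b\<in>B. c b \<in> K" using B(5) by (auto simp: span_over_def)
      have "restrict c B \<in> P" using c(2) by (auto simp: P_def)
      moreover have "lin_comb (restrict c B) B = w" using c(1) by (simp add: lin_comb_def)
      ultimately show "w \<in> (\<lambda>c. lin_comb c B) ` P" by force
    qed
  qed
  have inj: "inj_on (\<lambda>c. lin_comb c B) P"
  proof (rule inj_onI)
    fix c d assume c: "c \<in> P" and d: "d \<in> P" and eq: "lin_comb c B = lin_comb d B"
    have "lin_comb (\<lambda>b. c b - d b) B = vzero"
      using eq by (simp add: lin_comb_def fun_eq_iff left_diff_distrib sum_subtractf zero_fun_def)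
    moreover have "\<forall>b\<in>B. c b - d b \<in> K" using c d assms(1) by (auto simp: P_def intro: subf_diff)
    moreover have "((\<forall>b\<in>B. c b - d b \<in> K) \<and> lin_comb (\<lambda>b. c b - d b) B = vzero) \<longrightarrow> (\<forall>b\<in>B. c b - d b = 0)"
      using B(4) unfolding indep_over_def by (rule spec[where x="\<lambda>b. c b - d b", simplified])
    ultimately have "\<forall>b\<in>B. c b - d b = 0" by blast
    then show "c = d" using c d by (auto simp: P_def intro: PiE_ext)
  qed
  have "card W = card P" using img inj by (simp add: card_image)
  also have "\<dots> = card K ^ k" using B by (simp add: P_def card_PiE)
  finally show ?thesis .
qed

lemma card_ambient: "card (ambient N :: (nat \<Rightarrow> 'a::{field,finite}) set) = card (UNIV::'a set) ^ N"
  and finite_ambient: "finite (ambient N :: (nat \<Rightarrow> 'a::{field,finite}) set)"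
proof -
  define g where "g = (\<lambda>(f::nat\<Rightarrow>'a) i. if i < N then f i else 0)"
  define P :: "(nat\<Rightarrow>'a) set" where "P = PiE {..<N} (\<lambda>_. (UNIV::'a set))"
  have img: "ambient N = g ` P"
  proof
    show "g ` P \<subseteq> ambient N" by (auto simp: g_def ambient_def)
    show "ambient N \<subseteq> g ` P"
    proof
      fix v :: "nat \<Rightarrow> 'a" assume "v \<in> ambient N"
      then have "v = g (restrict v {..<N})" by (auto simp: g_def ambient_def fun_eq_iff restrict_def)
      moreover have "restrict v {..<N} \<in> P" by (simp add: P_def)
      ultimately show "v \<in> g ` P" by blast
    qed
  qed
  have inj: "inj_on g P"
  proof (rule inj_onI)
    fix a b assume "a \<in> P" "b \<in> P" "g a = g b"
    then show "a = b" by (auto simp: P_def g_def fun_eq_iff PiE_def extensional_def) (metis not_less)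
  qed
  have "finite P" by (simp add: P_def finite_PiE)
  then show "finite (ambient N :: (nat \<Rightarrow> 'a::{field,finite}) set)" using img by simp
  show "card (ambient N :: (nat \<Rightarrow> 'a::{field,finite}) set) = card (UNIV::'a set) ^ N"
    using img inj by (simp add: card_image P_def card_PiE)
qed



lemma nat_pow_dvd: "(x::nat) \<ge> 1 \<Longrightarrow> (x - 1) dvd (x^n - 1)"
proof (induction n)
  case (Suc n)
  have "x^n \<ge> 1" using Suc.prems by simp
  then have "x^Suc n - 1 = x * (x^n - 1) + (x - 1)" using Suc.prems
    by (simp add: algebra_simps diff_mult_distrib2)
  then show ?case using Suc.IH Suc.prems by (metis dvd_add dvd_mult dvd_refl)
qed simp

locale prt =
  fixes K :: "'a::{field,finite} set" and q t n :: nat and U :: "(nat \<Rightarrow> 'a) set"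
    and S :: "(nat \<Rightarrow> 'a) set set" and U1 U2 :: "(nat \<Rightarrow> 'a) set" and Q :: nat
  assumes subf: "is_subfield K" and cardK: "card K = q" and cardF: "card (UNIV :: 'a set) = q ^ t"
    and n2: "n \<ge> 2" and t2: "t \<ge> 2"
    and Uamb: "U \<subseteq> ambient (2*n)" and Usub: "subspace_over K U" and Udim: "has_dim K U (t*n)"
    and Usc: "scattered K U"
    and Scard: "card S = (card K ^ (n*t) - 1) div (card K ^ t - 1)"
    and Sprops: "\<forall>s\<in>S. s \<subseteq> ambient (2*n) \<and> subspace_over UNIV s \<and> has_dim UNIV s 2
                 \<and> has_dim K (s \<inter> U) t"
    and Sdisj: "\<forall>s\<in>S. \<forall>s'\<in>S. s \<noteq> s' \<longrightarrow> s \<inter> s' = {vzero}"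
    and T1: "U1 \<subseteq> ambient (2*n) \<and> subspace_over UNIV U1 \<and> has_dim UNIV U1 n \<and>
                 (\<forall>P\<in>linear_set U. \<not> P \<subseteq> U1) \<and> (\<forall>s\<in>S. U1 \<inter> s \<noteq> {vzero})"
    and T2: "U2 \<subseteq> ambient (2*n) \<and> subspace_over UNIV U2 \<and> has_dim UNIV U2 n \<and>
                 (\<forall>P\<in>linear_set U. \<not> P \<subseteq> U2) \<and> (\<forall>s\<in>S. U2 \<inter> s \<noteq> {vzero})"
    and U12: "U1 \<noteq> U2" and QF: "card (UNIV :: 'a set) = Q"
begin


lemma q2: "q \<ge> 2"
proof -
  have "{0,1} \<subseteq> K" using subf by (simp add: is_subfield_def)
  then have "card {0::'a,1} \<le> card K" by (intro card_mono) auto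
  then show ?thesis using cardK by simp
qed

lemma Q4: "Q \<ge> 4"
proof -
  have "q^2 \<le> q^t" using t2 q2 by (simp add: power_increasing)
  moreover have "2*2 \<le> q*q" using q2 by (intro mult_le_mono) auto
  then have "4 \<le> q^2" by (simp add: power2_eq_square)
  ultimately show ?thesis using cardF QF by simp
qed

lemma qQ: "q < Q"
proof -
  have "q^1 < q^t" using t2 q2 power_strict_increasing[of 1 t q] by simp
  then show ?thesis using cardF QF by simp
qed

lemma cardU: "card U = Q ^ n"
  using card_has_dim[OF subf Udim] cardK cardF QF by (simp add: power_mult)

lemma T1a: "U1 \<subseteq> ambient (2*n)" "subspace_over UNIV U1" "has_dim UNIV U1 n"
   "\<forall>P\<in>linear_set U. \<not> P \<subseteq> U1" "\<forall>s\<in>S. U1 \<inter> s \<noteq> {vzero}"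
  using T1 by simp_all
lemma T2a: "U2 \<subseteq> ambient (2*n)" "subspace_over UNIV U2" "has_dim UNIV U2 n"
   "\<forall>P\<in>linear_set U. \<not> P \<subseteq> U2" "\<forall>s\<in>S. U2 \<inter> s \<noteq> {vzero}"
  using T2 by simp_all

lemma cardU1: "card U1 = Q ^ n"
  using card_has_dim[OF subfield_UNIV T1a(3)] QF by simp
lemma cardU2: "card U2 = Q ^ n"
  using card_has_dim[OF subfield_UNIV T2a(3)] QF by simp

lemma finU: "finite U" using Uamb finite_ambient by (rule finite_subset)
lemma finU1: "finite U1" using T1a(1) finite_ambient by (rule finite_subset)
lemma finU2: "finite U2" using T2a(1) finite_ambient by (rule finite_subset)

lemma sU1: "subspace_over UNIV U1" and sU2: "subspace_over UNIV U2"
  using T1a T2a by auto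

lemma Sp: assumes "s \<in> S" shows "s \<subseteq> ambient (2*n)" "subspace_over UNIV s" "has_dim UNIV s 2"
                 "has_dim K (s \<inter> U) t"
  using Sprops assms by auto

lemma finS_mem: "s \<in> S \<Longrightarrow> finite s"
  using Sp(1) finite_ambient by (rule finite_subset)

lemma cards: "s \<in> S \<Longrightarrow> card s = Q^2"
  using card_has_dim[OF subfield_UNIV Sp(3)] QF by simp

lemma cardsU: assumes "s \<in> S" shows "card (s \<inter> U) = Q"
proof -
  have "card (s \<inter> U) = card K ^ t" using card_has_dim[OF subf Sp(4)[OF assms]] .
  then show ?thesis using cardK cardF QF by simp
qed

lemma subs: "s \<in> S \<Longrightarrow> subspace_over UNIV s"
  using Sp by blast

lemma scat: assumes "u \<in> U" "u \<noteq> 0" "vsm c u \<in> U" shows "c \<in> K"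
proof -
  have "has_dim K (point u \<inter> U) 1" using Usc assms by (simp add: scattered_def)
  then obtain B where B: "finite B" "card B = 1" "span_over K B = point u \<inter> U"
    unfolding has_dim_def by blast
  then obtain b where b: "B = {b}" by (metis card_1_singletonE)
  have lc: "lin_comb d {b} = vsm (d b) b" for d by (simp add: lin_comb_def vsm_def)
  have "u \<in> span_over K B" using B(3) assms point_self by blast
  then obtain d where d: "u = vsm (d b) b" "d b \<in> K" by (auto simp: span_over_def b lc)
  have "vsm c u \<in> span_over K B" using B(3) assms by (auto simp: point_mem)
  then obtain e where e: "vsm c u = vsm (e b) b" "e b \<in> K" by (auto simp: span_over_def b lc)
  have "d b \<noteq> 0" "b \<noteq> 0" using d assms(2) by auto
  have "vsm (c * d b) b = vsm (e b) b" using d e by (simp add: vsm_assoc)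
  then have "c * d b = e b" using \<open>b \<noteq> 0\<close> by (rule vsm_cancel)
  then have "c = e b / d b" using \<open>d b \<noteq> 0\<close> by (simp add: field_simps)
  then show ?thesis using subf_div[OF subf e(2) d(2)] by simp
qed

lemma nopt_gen: assumes "\<forall>P\<in>linear_set U. \<not> P \<subseteq> W" "subspace_over UNIV W" "v \<in> U" "v \<in> W"
  shows "v = 0"
proof (rule ccontr)
  assume "v \<noteq> 0"
  then have "point v \<in> linear_set U" using assms by (auto simp: linear_set_def)
  moreover have "point v \<subseteq> W" using point_sub assms by blast
  ultimately show False using assms(1) by blast
qed

lemma nopt1: "v \<in> U \<Longrightarrow> v \<in> U1 \<Longrightarrow> v = 0" using nopt_gen[OF T1a(4) T1a(2)] by blast
lemma nopt2: "v \<in> U \<Longrightarrow> v \<in> U2 \<Longrightarrow> v = 0" using nopt_gen[OF T2a(4) T2a(2)] by blast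

lemma cardS: "card S * (Q - 1) = Q^n - 1" and finS: "finite S"
proof -
  have Q1: "Q \<ge> 1" using Q4 by simp
  have "card K ^ (n*t) = Q^n" using cardK cardF QF by (simp add: power_mult[symmetric] mult.commute)
  have Qq: "Q = q^t" using QF cardF by simp
  then have cs: "card S = (Q^n - 1) div (Q - 1)" using Scard cardK \<open>card K ^ (n*t) = Q^n\<close> by simp
  then show "card S * (Q - 1) = Q^n - 1" using nat_pow_dvd[OF Q1] by simp
  have "Q^n > Q^0" using Q4 n2 by (intro power_strict_increasing) auto
  then have "card S > 0" using \<open>card S * (Q - 1) = Q^n - 1\<close> by (cases "card S") auto
  then show "finite S" by (rule card_ge_0_finite)
qed

end


lemma indep2:
  assumes "X \<noteq> (0::nat\<Rightarrow>'a::field)" "Y \<notin> point X"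
    "vsm a X + vsm b Y = vsm a' X + vsm b' Y"
  shows "a = a' \<and> b = b'"
proof -
  have e: "vsm (b - b') Y = vsm (a' - a) X"
    using assms(3) by (simp add: vsm_diff1 algebra_simps)
  show ?thesis
  proof (cases "b = b'")
    case True
    then have "vsm (a' - a) X = 0" using e by simp
    then show ?thesis using True assms(1) by (simp add: vsm_eq_0)
  next
    case False
    then have "vsm (inverse (b - b')) (vsm (b - b') Y) = Y" by (simp add: vsm_assoc)
    then have "Y = vsm (inverse (b - b') * (a' - a)) X" using e by (simp add: vsm_assoc)
    then have "Y \<in> point X" by (auto simp: point_mem)
    then show ?thesis using assms(2) by simp
  qed
qed

lemma line2:
  fixes s :: "(nat \<Rightarrow> 'a::{field,finite}) set"
  assumes "subspace_over UNIV s" "finite s" "card s = card (UNIV::'a set) ^ 2"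
    "x \<in> s" "x \<noteq> 0" "y \<in> s" "y \<notin> point x"
  shows "s = {vsm a x + vsm b y | a b. True}"
proof -
  define h where "h = (\<lambda>(a,b). vsm a x + vsm b y)"
  have img: "{vsm a x + vsm b y | a b. True} = h ` UNIV" by (auto simp: h_def)
  have inj: "inj h" unfolding h_def
    by (rule injI) (use indep2[OF assms(5,7)] in auto)
  have c: "card (h ` UNIV) = card (UNIV::'a set) ^ 2"
    using inj by (simp add: card_image power2_eq_square UNIV_Times_UNIV[symmetric] card_cartesian_product del: UNIV_Times_UNIV)
  have sub: "h ` UNIV \<subseteq> s" using assms by (auto simp: h_def intro!: sub_add sub_smU)
  have "h ` UNIV = s" using card_subset_eq[OF assms(2) sub] c assms(3) by simp
  then show ?thesis using img by simp
qed

context prt begin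

lemma meet_gen:
  assumes W: "subspace_over UNIV W" "\<forall>P\<in>linear_set U. \<not> P \<subseteq> W" "\<forall>s\<in>S. W \<inter> s \<noteq> {vzero}"
    and s: "s \<in> S"
  shows "\<exists>x. x \<in> W \<and> x \<noteq> 0 \<and> s \<inter> W = point x"
proof -
  have "0 \<in> W" "0 \<in> s" using W(1) subs[OF s] sub_zero by (metis vzero_eq)+
  then obtain x where x: "x \<in> W" "x \<in> s" "x \<noteq> 0" using W(3) s by auto
  have "\<not> s \<inter> U \<subseteq> {0}"
  proof
    assume "s \<inter> U \<subseteq> {0}"
    then have "card (s \<inter> U) \<le> card {0::nat\<Rightarrow>'a}" by (intro card_mono) auto
    then show False using cardsU[OF s] Q4 by simp
  qed
  then obtain w where w: "w \<in> s" "w \<in> U" "w \<noteq> 0" by auto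
  have wW: "w \<notin> W" using nopt_gen[OF W(2) W(1) w(2)] w(3) by blast
  have pW: "point x \<subseteq> W" using point_sub[OF W(1) x(1)] .
  then have "w \<notin> point x" using wW by blast
  then have sdesc: "s = {vsm a x + vsm b w | a b. True}"
    using line2[OF subs[OF s] finS_mem[OF s] cards[OF s, folded QF] x(2) x(3) w(1)] by simp
  have "s \<inter> W \<subseteq> point x"
  proof
    fix z assume z: "z \<in> s \<inter> W"
    then obtain a b where ab: "z = vsm a x + vsm b w" using sdesc by blast
    show "z \<in> point x"
    proof (cases "b = 0")
      case True then show ?thesis using ab by (auto simp: point_mem)
    next
      case False
      have "z - vsm a x \<in> W" using z x(1) W(1) by (intro sub_diff[OF W(1) subfield_UNIV] sub_smU) auto
      then have "vsm b w \<in> W" using ab by simp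
      then have "vsm (inverse b) (vsm b w) \<in> W" using W(1) by (simp add: sub_smU)
      then have "w \<in> W" using False by (simp add: vsm_assoc)
      then show ?thesis using wW by simp
    qed
  qed
  moreover have "point x \<subseteq> s" using point_sub[OF subs[OF s] x(2)] .
  ultimately have "s \<inter> W = point x" using pW by blast
  then show ?thesis using x by blast
qed

lemma meet1: "s \<in> S \<Longrightarrow> \<exists>x. x \<in> U1 \<and> x \<noteq> 0 \<and> s \<inter> U1 = point x"
  using meet_gen[OF T1a(2) T1a(4) T1a(5)] by blast
lemma meet2: "s \<in> S \<Longrightarrow> \<exists>x. x \<in> U2 \<and> x \<noteq> 0 \<and> s \<inter> U2 = point x"
  using meet_gen[OF T2a(2) T2a(4) T2a(5)] by blast

lemma zeroU: "0 \<in> U" using Usub sub_zero by (metis vzero_eq)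
lemma zeros: "s \<in> S \<Longrightarrow> 0 \<in> s" using subs sub_zero by (metis vzero_eq)

lemma cover: assumes "u \<in> U" "u \<noteq> 0" shows "\<exists>s\<in>S. u \<in> s"
proof -
  define A where "A = (\<Union>s\<in>S. s \<inter> U - {0})"
  have "card A = (\<Sum>s\<in>S. card (s \<inter> U - {0}))" unfolding A_def
  proof (rule card_UN_disjoint[OF finS])
    show "\<forall>s\<in>S. finite (s \<inter> U - {0})" using finU by blast
    show "\<forall>s\<in>S. \<forall>s'\<in>S. s \<noteq> s' \<longrightarrow> (s \<inter> U - {0}) \<inter> (s' \<inter> U - {0}) = {}"
      using Sdisj by auto
  qed
  also have "\<dots> = (\<Sum>s\<in>S. Q - 1)"
    by (rule sum.cong) (auto simp: card_Diff_singleton zeros zeroU cardsU)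
  also have "\<dots> = Q^n - 1" using cardS by simp
  also have "\<dots> = card (U - {0})" using cardU zeroU by (simp add: card_Diff_singleton)
  finally have c: "card A = card (U - {0})" .
  have "A \<subseteq> U - {0}" by (auto simp: A_def)
  then have "A = U - {0}" using c finU by (intro card_subset_eq) auto
  then show ?thesis using assms by (auto simp: A_def)
qed

end


context prt begin

lemma z1: "0 \<in> U1" and z2: "0 \<in> U2" using sU1 sU2 sub_zero by (metis vzero_eq)+

lemma inter0: "U1 \<inter> U2 = {0}"
proof (rule ccontr)
  assume "U1 \<inter> U2 \<noteq> {0}"
  then obtain d where d: "d \<in> U1" "d \<in> U2" "d \<noteq> 0" using z1 z2 by blast
  define h where "h = (\<lambda>(a::nat\<Rightarrow>'a, b). a + b)"
  define M where "M = h ` (U1 \<times> U2)"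
  have finM: "finite M" using finU1 finU2 by (simp add: M_def)
  have Mmem: "m \<in> M \<longleftrightarrow> (\<exists>a\<in>U1. \<exists>b\<in>U2. m = a + b)" for m by (auto simp: M_def h_def)
  have Madd: "m + m' \<in> M" if mm: "m \<in> M" "m' \<in> M" for m m'
  proof -
    obtain a b a' b' where "a \<in> U1" "b \<in> U2" "a' \<in> U1" "b' \<in> U2" "m = a + b" "m' = a' + b'"
      using mm unfolding Mmem by blast
    moreover have "m + m' = (a + a') + (b + b')" using calculation by (simp add: algebra_simps)
    ultimately show ?thesis unfolding Mmem using sub_add[OF sU1] sub_add[OF sU2] by blast
  qed
  have Msm: "vsm c m \<in> M" if mm: "m \<in> M" for m c
  proof -
    obtain a b where "a \<in> U1" "b \<in> U2" "m = a + b" using mm unfolding Mmem by blast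
    moreover have "vsm c m = vsm c a + vsm c b" using calculation by (simp add: vsm_add2)
    ultimately show ?thesis unfolding Mmem using sub_smU[OF sU1] sub_smU[OF sU2] by blast
  qed
  have Mneg: "m \<in> M \<Longrightarrow> - m \<in> M" for m using Msm[of m "-1"] by (simp add: vsm_neg)
  have M0: "0 \<in> M" unfolding Mmem using z1 z2 by (metis add_0)
  have cM: "card M < Q^n * Q^n"
  proof -
    have "\<not> inj_on h (U1 \<times> U2)"
    proof
      assume "inj_on h (U1 \<times> U2)"
      moreover have "(d, 0) \<in> U1 \<times> U2" "(0, d) \<in> U1 \<times> U2" using d z1 z2 by auto
      moreover have "h (d,0) = h (0,d)" by (simp add: h_def)
      ultimately have "(d,0) = (0::nat\<Rightarrow>'a,d)" by (meson inj_onD)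
      then show False using d by simp
    qed
    then have "card M \<noteq> card (U1 \<times> U2)" using inj_on_iff_eq_card[of "U1 \<times> U2" h] finU1 finU2
      by (simp add: M_def)
    moreover have "card M \<le> card (U1 \<times> U2)" unfolding M_def using finU1 finU2 by (intro card_image_le) simp
    ultimately show ?thesis by (simp add: card_cartesian_product cardU1 cardU2)
  qed
  have notUM: "\<not> U \<subseteq> M"
  proof
    assume UM: "U \<subseteq> M"
    have "K \<noteq> UNIV" using qQ cardK QF by auto
    then obtain \<omega> where om: "\<omega> \<notin> K" by blast
    define g where "g = (\<lambda>(a::nat\<Rightarrow>'a, b). a + vsm \<omega> b)"
    have inj: "inj_on g (U \<times> U)"
    proof (rule inj_onI, clarify)
      fix a b a' b' assume ab: "a \<in> U" "b \<in> U" "a' \<in> U" "b' \<in> U" "g (a,b) = g (a',b')"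
      have e: "vsm \<omega> (b - b') = a' - a" using ab(5) by (simp add: g_def vsm_diff2 algebra_simps)
      have "b = b'"
      proof (rule ccontr)
        assume "b \<noteq> b'"
        moreover have "b - b' \<in> U" using ab sub_diff[OF Usub subf] by blast
        moreover have "vsm \<omega> (b - b') \<in> U" using e ab sub_diff[OF Usub subf] by simp
        ultimately show False using scat om by simp
      qed
      then show "a = a' \<and> b = b'" using e by simp
    qed
    have "g ` (U \<times> U) \<subseteq> M" using UM by (auto simp: g_def intro!: Madd Msm)
    then have "card (U \<times> U) \<le> card M" using card_inj_on_le[OF inj _ finM] by blast
    then show False using cM cardU by (simp add: card_cartesian_product)
  qed
  then obtain u0 where u0: "u0 \<in> U" "u0 \<notin> M" by blast
  have c1: "card (U \<inter> M) \<le> card (U - M)"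
  proof (rule card_inj_on_le[where f="\<lambda>m. u0 + m"])
    show "inj_on ((+) u0) (U \<inter> M)" by (auto intro: inj_onI)
    show "(+) u0 ` (U \<inter> M) \<subseteq> U - M"
    proof
      fix z assume "z \<in> (+) u0 ` (U \<inter> M)"
      then obtain m where m: "m \<in> U" "m \<in> M" "z = u0 + m" by blast
      have "u0 + m \<in> U" using m u0 Usub sub_add by blast
      moreover have "u0 + m \<notin> M"
      proof
        assume "u0 + m \<in> M"
        then have "u0 + m + - m \<in> M" using Madd Mneg m by blast
        then show False using u0 by simp
      qed
      ultimately show "z \<in> U - M" using m by simp
    qed
    show "finite (U - M)" using finU by simp
  qed
  have c2: "Q^n \<le> 2 * card (U - M)" using card_Int_Diff[OF finU, of M] c1 cardU by simp
  define S' where "S' = {s\<in>S. s \<inter> U1 \<subseteq> U1 \<inter> U2}"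
  have finS': "finite S'" using finS by (simp add: S'_def)
  have sub1: "U - M \<subseteq> (\<Union>s\<in>S'. s \<inter> U - {0})"
  proof
    fix u assume u: "u \<in> U - M"
    then have "u \<noteq> 0" using M0 by auto
    then obtain s where s: "s \<in> S" "u \<in> s" using cover u by blast
    obtain x where x: "x \<in> U1" "x \<noteq> 0" "s \<inter> U1 = point x" using meet1[OF s(1)] by blast
    obtain y where y: "y \<in> U2" "y \<noteq> 0" "s \<inter> U2 = point y" using meet2[OF s(1)] by blast
    show "u \<in> (\<Union>s\<in>S'. s \<inter> U - {0})"
    proof (cases "y \<in> point x")
      case True
      then obtain c where c: "y = vsm c x" by (auto simp: point_mem)
      then have "c \<noteq> 0" using y(2) by auto
      then have "x = vsm (inverse c) y" using c by (simp add: vsm_assoc)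
      then have "x \<in> U2" using sub_smU[OF sU2 y(1), of "inverse c"] by simp
      then have "point x \<subseteq> U2" using point_sub sU2 by blast
      then have "s \<in> S'" using x(3) s(1) unfolding S'_def by blast
      then show ?thesis using s u \<open>u \<noteq> 0\<close> by blast
    next
      case False
      have "x \<in> s" using x(3) point_self[of x] by (metis IntD1)
      have "y \<in> s" using y(3) point_self[of y] by (metis IntD1)
      then have "s = {vsm a x + vsm b y | a b. True}" using \<open>x \<in> s\<close>
        using line2[OF subs[OF s(1)] finS_mem[OF s(1)] cards[OF s(1), folded QF] _ x(2) _ False] by simp
      then obtain a b where "u = vsm a x + vsm b y" using s(2) by blast
      moreover have "vsm a x \<in> U1" "vsm b y \<in> U2" using sub_smU[OF sU1 x(1)] sub_smU[OF sU2 y(1)] by auto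
      ultimately have "u \<in> M" unfolding Mmem by blast
      then show ?thesis using u by simp
    qed
  qed
  have c3: "card (U - M) \<le> card S' * (Q - 1)"
  proof -
    have "card (U - M) \<le> card (\<Union>s\<in>S'. s \<inter> U - {0})"
      using sub1 finU by (intro card_mono) auto
    also have "\<dots> \<le> (\<Sum>s\<in>S'. card (s \<inter> U - {0}))" using card_UN_le[OF finS'] .
    also have "\<dots> = (\<Sum>s\<in>S'. Q - 1)"
      by (rule sum.cong) (auto simp: S'_def card_Diff_singleton zeros zeroU cardsU)
    finally show ?thesis by simp
  qed
  have c4: "card S' * (Q - 1) \<le> card (U1 \<inter> U2) - 1"
  proof -
    have "card (\<Union>s\<in>S'. s \<inter> U1 - {0}) = (\<Sum>s\<in>S'. card (s \<inter> U1 - {0}))"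
    proof (rule card_UN_disjoint[OF finS'])
      show "\<forall>s\<in>S'. finite (s \<inter> U1 - {0})" using finU1 by blast
      show "\<forall>s\<in>S'. \<forall>s'\<in>S'. s \<noteq> s' \<longrightarrow> (s \<inter> U1 - {0}) \<inter> (s' \<inter> U1 - {0}) = {}"
        using Sdisj by (auto simp: S'_def)
    qed
    also have "\<dots> = (\<Sum>s\<in>S'. Q - 1)"
    proof (rule sum.cong)
      fix s assume "s \<in> S'"
      then have s: "s \<in> S" by (simp add: S'_def)
      obtain x where x: "x \<in> U1" "x \<noteq> 0" "s \<inter> U1 = point x" using meet1[OF s] by blast
      have "0 \<in> point x" by (auto simp: point_mem intro: exI[of _ 0])
      then show "card (s \<inter> U1 - {0}) = Q - 1" using x card_point[OF x(2)] QF
        by (simp add: card_Diff_singleton)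
    qed simp
    finally have "card S' * (Q - 1) = card (\<Union>s\<in>S'. s \<inter> U1 - {0})" by simp
    also have "\<dots> \<le> card (U1 \<inter> U2 - {0})"
      using finU1 by (intro card_mono) (auto simp: S'_def)
    also have "\<dots> = card (U1 \<inter> U2) - 1" using z1 z2 by (simp add: card_Diff_singleton)
    finally show ?thesis .
  qed
  have "U1 \<noteq> U1 \<inter> U2"
  proof
    assume "U1 = U1 \<inter> U2"
    then have "U1 \<subseteq> U2" by blast
    then have "U1 = U2" using finU2 cardU1 cardU2 by (intro card_subset_eq) auto
    then show False using U12 by simp
  qed
  then obtain y1 where y1: "y1 \<in> U1" "y1 \<notin> U2" by blast
  have c5: "Q * card (U1 \<inter> U2) \<le> Q^n"
  proof -
    define k where "k = (\<lambda>(c::'a, e). vsm c y1 + e)"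
    have inj: "inj_on k ((UNIV::'a set) \<times> (U1 \<inter> U2))"
    proof (rule inj_onI)
      fix p p' assume p: "p \<in> (UNIV::'a set) \<times> (U1 \<inter> U2)" and p': "p' \<in> (UNIV::'a set) \<times> (U1 \<inter> U2)"
        and kp: "k p = k p'"
      obtain c e where pe: "p = (c, e)" by (cases p)
      obtain c' e' where pe': "p' = (c', e')" by (cases p')
      have ce: "e \<in> U2" "e' \<in> U2" using p p' pe pe' by auto
      have "vsm c y1 + e = vsm c' y1 + e'" using kp pe pe' by (simp add: k_def)
      then have eq: "vsm (c - c') y1 = e' - e" by (simp add: vsm_diff1 algebra_simps)
      have "c = c'"
      proof (rule ccontr)
        assume cc: "c \<noteq> c'"
        have "e' - e \<in> U2" using ce sub_diff[OF sU2 subfield_UNIV] by blast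
        then have "vsm (inverse (c - c')) (e' - e) \<in> U2" using sU2 sub_smU by blast
        also have "vsm (inverse (c - c')) (e' - e) = y1" using cc by (simp add: eq[symmetric] vsm_assoc)
        finally show False using y1 by simp
      qed
      then show "p = p'" using eq pe pe' by simp
    qed
    have sub: "k ` ((UNIV::'a set) \<times> (U1 \<inter> U2)) \<subseteq> U1"
    proof
      fix z assume "z \<in> k ` ((UNIV::'a set) \<times> (U1 \<inter> U2))"
      then obtain c e where "e \<in> U1" "z = vsm c y1 + e" by (auto simp: k_def)
      then show "z \<in> U1" using sub_add[OF sU1 sub_smU[OF sU1 y1(1)]] by simp
    qed
    have "card ((UNIV::'a set) \<times> (U1 \<inter> U2)) \<le> card U1" using card_inj_on_le[OF inj sub finU1] .
    then show ?thesis using QF cardU1 by (simp add: card_cartesian_product)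
  qed
  have "4 * card (U1 \<inter> U2) \<le> Q * card (U1 \<inter> U2)" using Q4 by (intro mult_right_mono) auto
  moreover have "Q^n > 0" using Q4 by simp
  ultimately show False using c2 c3 c4 c5 by linarith
qed

lemma decomp_unique:
  assumes "a \<in> U1" "a' \<in> U1" "b \<in> U2" "b' \<in> U2" "a + b = a' + b'"
  shows "a = a' \<and> b = b'"
proof -
  have "a - a' = b' - b" using assms(5) by (simp add: algebra_simps)
  moreover have "a - a' \<in> U1" using assms sub_diff[OF sU1 subfield_UNIV] by blast
  moreover have "b' - b \<in> U2" using assms sub_diff[OF sU2 subfield_UNIV] by blast
  ultimately have "b' - b \<in> U1 \<inter> U2" by simp
  then have "b' - b = 0" using inter0 by blast
  then have "b = b'" by simp
  then show ?thesis using assms(5) by simp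
qed

lemma sum_amb: "{a + b | a b. a \<in> U1 \<and> b \<in> U2} = ambient (2*n)"
proof -
  define h where "h = (\<lambda>(a::nat\<Rightarrow>'a, b). a + b)"
  have e: "{a + b | a b. a \<in> U1 \<and> b \<in> U2} = h ` (U1 \<times> U2)" by (auto simp: h_def)
  have inj: "inj_on h (U1 \<times> U2)" by (rule inj_onI) (auto simp: h_def dest: decomp_unique)
  have sub: "h ` (U1 \<times> U2) \<subseteq> ambient (2*n)"
    using T1a(1) T2a(1) by (fastforce simp: h_def ambient_def)
  have "card (h ` (U1 \<times> U2)) = card (ambient (2*n) :: (nat\<Rightarrow>'a) set)"
    using inj cardU1 cardU2 card_ambient[where 'a='a] QF
    by (simp add: card_image card_cartesian_product power_mult[symmetric] power_add[symmetric] mult_2)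
  then show ?thesis using e card_subset_eq[OF finite_ambient sub] by simp
qed

end


context prt begin

definition p1 :: "(nat \<Rightarrow> 'a) \<Rightarrow> (nat \<Rightarrow> 'a)" where
  "p1 u = (SOME a. a \<in> U1 \<and> u - a \<in> U2)"

definition fm :: "(nat \<Rightarrow> 'a) \<Rightarrow> (nat \<Rightarrow> 'a)" where
  "fm a = inv_into U p1 a - a"

lemma p1_prop: assumes "u \<in> U" shows "p1 u \<in> U1 \<and> u - p1 u \<in> U2"
proof -
  have "u \<in> ambient (2*n)" using assms Uamb by blast
  then obtain a b where ab: "a \<in> U1" "b \<in> U2" "u = a + b" using sum_amb by blast
  then have "\<exists>a. a \<in> U1 \<and> u - a \<in> U2" by (intro exI[of _ a]) simp
  then show ?thesis unfolding p1_def by (rule someI_ex)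
qed

lemma p1_inj: "inj_on p1 U"
proof (rule inj_onI)
  fix u u' assume u: "u \<in> U" "u' \<in> U" "p1 u = p1 u'"
  have "(u - p1 u) - (u' - p1 u') \<in> U2"
    using p1_prop[OF u(1)] p1_prop[OF u(2)] sub_diff[OF sU2 subfield_UNIV] by blast
  then have "u - u' \<in> U2" using u(3) by simp
  moreover have "u - u' \<in> U" using u sub_diff[OF Usub subf] by blast
  ultimately have "u - u' = 0" using nopt2 by blast
  then show "u = u'" by simp
qed

lemma p1_img: "p1 ` U = U1"
proof -
  have sub: "p1 ` U \<subseteq> U1" using p1_prop by blast
  have "card (p1 ` U) = card U1" using p1_inj cardU cardU1 by (simp add: card_image)
  then show ?thesis using card_subset_eq[OF finU1 sub] by simp
qed

lemma F1: assumes "a \<in> U1" shows "fm a \<in> U2" "a + fm a \<in> U"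
proof -
  have a: "a \<in> p1 ` U" using p1_img assms by simp
  define u where "u = inv_into U p1 a"
  have u: "u \<in> U" "p1 u = a" using inv_into_into[OF a] f_inv_into_f[OF a] by (auto simp: u_def)
  have "fm a = u - p1 u" using u by (simp add: fm_def u_def)
  then show "fm a \<in> U2" "a + fm a \<in> U" using p1_prop[OF u(1)] u by auto
qed

lemma F2: assumes "a \<in> U1" "b \<in> U2" "a + b \<in> U" shows "b = fm a"
proof -
  have "(a + b) - (a + fm a) \<in> U" using assms F1 sub_diff[OF Usub subf] by blast
  moreover have "(a + b) - (a + fm a) = b - fm a" by simp
  ultimately have i1: "b - fm a \<in> U" by simp
  have i2: "b - fm a \<in> U2" using assms F1 sub_diff[OF sU2 subfield_UNIV] by blast
  have "b - fm a = 0" using nopt2[OF i1 i2] .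
  then show ?thesis by simp
qed

lemma F3: assumes "u \<in> U" shows "\<exists>a\<in>U1. u = a + fm a"
proof -
  have "u - p1 u = fm (p1 u)" using p1_prop[OF assms] assms by (intro F2) auto
  then show ?thesis using p1_prop[OF assms] by (metis add_diff_cancel_left' diff_add_cancel)
qed

lemma f_add: assumes "a \<in> U1" "a' \<in> U1" shows "fm (a + a') = fm a + fm a'"
proof -
  have "(a + fm a) + (a' + fm a') \<in> U" using F1 assms sub_add[OF Usub] by blast
  then have "(a + a') + (fm a + fm a') \<in> U" by (simp add: algebra_simps)
  moreover have "a + a' \<in> U1" "fm a + fm a' \<in> U2" using assms F1 sub_add[OF sU1] sub_add[OF sU2] by blast+
  ultimately show ?thesis using F2 by simp
qed

lemma f_K: assumes "c \<in> K" "a \<in> U1" shows "fm (vsm c a) = vsm c (fm a)"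
proof -
  have "vsm c (a + fm a) \<in> U" using F1 assms sub_sm[OF Usub] by blast
  then have "vsm c a + vsm c (fm a) \<in> U" by (simp add: vsm_add2)
  moreover have "vsm c a \<in> U1" "vsm c (fm a) \<in> U2" using assms F1 sub_smU[OF sU1] sub_smU[OF sU2] by blast+
  ultimately show ?thesis using F2 by simp
qed

lemma f0: "fm 0 = 0"
  using F2[OF z1 z2] zeroU by simp

lemma f_neg: "a \<in> U1 \<Longrightarrow> fm (- a) = - fm a"
  using f_K[of "-1" a] subf by (simp add: vsm_neg is_subfield_def)

lemma f_inj: "inj_on fm U1"
proof (rule inj_onI)
  fix a a' assume a: "a \<in> U1" "a' \<in> U1" "fm a = fm a'"
  have "(a + fm a) - (a' + fm a') \<in> U" using F1 a sub_diff[OF Usub subf] by blast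
  then have "a - a' \<in> U" using a(3) by simp
  moreover have "a - a' \<in> U1" using a sub_diff[OF sU1 subfield_UNIV] by blast
  ultimately have "a - a' = 0" using nopt1 by blast
  then show "a = a'" by simp
qed

lemma f_bij: "bij_betw fm U1 U2"
proof -
  have sub: "fm ` U1 \<subseteq> U2" using F1 by blast
  have "card (fm ` U1) = card U2" using f_inj cardU1 cardU2 by (simp add: card_image)
  then have "fm ` U1 = U2" using card_subset_eq[OF finU2 sub] by simp
  then show ?thesis using f_inj by (simp add: bij_betw_def)
qed

lemma f_nz: assumes "a \<in> U1" "a \<noteq> 0" shows "fm a \<noteq> 0"
  using f_inj assms f0 z1 by (metis inj_onD)

lemma aplusf_nz: assumes "a \<in> U1" "a \<noteq> 0" shows "a + fm a \<noteq> 0"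
proof
  assume "a + fm a = 0"
  then have "a = - fm a" by (simp add: eq_neg_iff_add_eq_0)
  moreover have "- fm a \<in> U2" using sub_neg[OF sU2 subfield_UNIV F1(1)[OF assms(1)]] .
  ultimately have "a \<in> U2" by simp
  then show False using inter0 assms by blast
qed

lemma lineG: assumes x: "x \<in> U1" "x \<noteq> 0" shows "fm (vsm l x) \<in> point (fm x)"
proof -
  obtain s where s: "s \<in> S" "x + fm x \<in> s" using cover[OF F1(2)[OF x(1)] aplusf_nz[OF x]] by blast
  obtain x1 where x1: "x1 \<in> U1" "x1 \<noteq> 0" "s \<inter> U1 = point x1" using meet1[OF s(1)] by blast
  obtain y1 where y1: "y1 \<in> U2" "y1 \<noteq> 0" "s \<inter> U2 = point y1" using meet2[OF s(1)] by blast
  have nin: "y1 \<notin> point x1"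
  proof
    assume "y1 \<in> point x1"
    then have "y1 \<in> U1" using point_sub[OF sU1 x1(1)] by blast
    then show False using inter0 y1 by blast
  qed
  have x1s: "x1 \<in> s" using x1(3) point_self[of x1] by (metis IntD1)
  have y1s: "y1 \<in> s" using y1(3) point_self[of y1] by (metis IntD1)
  have sdesc: "s = {vsm a x1 + vsm b y1 | a b. True}"
    using line2[OF subs[OF s(1)] finS_mem[OF s(1)] cards[OF s(1), folded QF] x1s x1(2) y1s nin] .
  have dec: "p \<in> s" if p: "p \<in> U1" "p + fm p \<in> s" for p
  proof -
    obtain a b where ab: "p + fm p = vsm a x1 + vsm b y1" using p(2) sdesc by blast
    have "vsm a x1 \<in> U1" "vsm b y1 \<in> U2" using sub_smU[OF sU1 x1(1)] sub_smU[OF sU2 y1(1)] by auto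
    then have "p = vsm a x1" using decomp_unique[OF p(1) _ F1(1)[OF p(1)]] ab by blast
    then show "p \<in> s" using sub_smU[OF subs[OF s(1)] x1s] by simp
  qed
  define P where "P = {p \<in> U1. p + fm p \<in> s}"
  have Psub: "P \<subseteq> point x1" using dec x1(3) by (auto simp: P_def)
  have "(\<lambda>p. p + fm p) ` P = s \<inter> U"
  proof
    show "(\<lambda>p. p + fm p) ` P \<subseteq> s \<inter> U" using F1 by (auto simp: P_def)
    show "s \<inter> U \<subseteq> (\<lambda>p. p + fm p) ` P"
    proof
      fix u assume u: "u \<in> s \<inter> U"
      then obtain a where a: "a \<in> U1" "u = a + fm a" using F3 by blast
      then have "a \<in> P" using u by (simp add: P_def)
      then show "u \<in> (\<lambda>p. p + fm p) ` P" using a by blast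
    qed
  qed
  moreover have "inj_on (\<lambda>p. p + fm p) P"
  proof (rule inj_onI)
    fix p p' assume h: "p \<in> P" "p' \<in> P" "p + fm p = p' + fm p'"
    then have pp: "p \<in> U1" "p' \<in> U1" by (auto simp: P_def)
    show "p = p'" using decomp_unique[OF pp F1(1)[OF pp(1)] F1(1)[OF pp(2)] h(3)] by blast
  qed
  ultimately have "card P = Q" using cardsU[OF s(1)] card_image by metis
  moreover have "finite (point x1)" using finU1 point_sub[OF sU1 x1(1)] finite_subset by blast
  ultimately have Peq: "P = point x1" using Psub card_point[OF x1(2)] QF card_subset_eq by metis
  have "x \<in> point x1" using dec[OF x(1) s(2)] x(1) x1(3) by blast
  then have "vsm l x \<in> point x1" by (auto simp: point_mem vsm_assoc)
  then have lxP: "vsm l x \<in> P" using Peq by simp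
  then have A: "vsm l x + fm (vsm l x) \<in> s" "vsm l x \<in> s" using dec by (auto simp: P_def)
  have "(vsm l x + fm (vsm l x)) - vsm l x \<in> s" using A sub_diff[OF subs[OF s(1)] subfield_UNIV] by blast
  then have "fm (vsm l x) \<in> s" by simp
  moreover have "fm (vsm l x) \<in> U2" using F1(1) lxP by (simp add: P_def)
  ultimately have "fm (vsm l x) \<in> point y1" using y1(3) by blast
  then obtain c where c: "fm (vsm l x) = vsm c y1" by (auto simp: point_mem)
  have "x \<in> P" using dec x(1) s(2) by (simp add: P_def)
  then have "fm x \<in> point y1"
  proof -
    have "x + fm x - x \<in> s" using s(2) \<open>x \<in> P\<close> dec x(1) sub_diff[OF subs[OF s(1)] subfield_UNIV] by blast
    then show ?thesis using F1(1)[OF x(1)] y1(3) by auto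
  qed
  then obtain b where b: "fm x = vsm b y1" by (auto simp: point_mem)
  have "b \<noteq> 0" using b f_nz[OF x] by auto
  then have "vsm c y1 = vsm (c / b) (fm x)" using b by (simp add: vsm_assoc)
  then show ?thesis using c by (auto simp: point_mem)
qed

end


context prt begin

lemma fin_point: "x \<in> U2 \<Longrightarrow> finite (point x)"
  using finU2 point_sub[OF sU2] finite_subset by blast

lemma img_point: assumes x: "x \<in> U1" "x \<noteq> 0" shows "fm ` point x = point (fm x)"
proof -
  have sub: "fm ` point x \<subseteq> point (fm x)" using lineG[OF x] by (auto simp: point_mem)
  have pU: "point x \<subseteq> U1" using point_sub[OF sU1 x(1)] .
  have "inj_on fm (point x)" using f_inj pU inj_on_subset by blast
  then have "card (fm ` point x) = Q" using card_point[OF x(2)] QF by (simp add: card_image)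
  moreover have "card (point (fm x)) = Q" using card_point[OF f_nz[OF x]] QF by simp
  ultimately show ?thesis using card_subset_eq[OF fin_point[OF F1(1)[OF x(1)]] sub] by simp
qed

definition tau :: "(nat \<Rightarrow> 'a) \<Rightarrow> 'a \<Rightarrow> 'a" where
  "tau x l = (SOME m. fm (vsm l x) = vsm m (fm x))"

lemma tau_prop: assumes x: "x \<in> U1" "x \<noteq> 0" shows "fm (vsm l x) = vsm (tau x l) (fm x)"
proof -
  have "\<exists>m. fm (vsm l x) = vsm m (fm x)" using lineG[OF x, of l] by (auto simp: point_mem)
  then show ?thesis unfolding tau_def by (rule someI_ex)
qed

lemma tau_eq1: assumes x: "x \<in> U1" "x \<noteq> 0" and y: "y \<in> U1" "y \<noteq> 0" and nin: "y \<notin> point x"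
  shows "tau x = tau y"
proof
  fix l
  have fnin: "fm y \<notin> point (fm x)"
  proof
    assume "fm y \<in> point (fm x)"
    then obtain z where z: "z \<in> point x" "fm y = fm z" using img_point[OF x] by blast
    have "z \<in> U1" using z(1) point_sub[OF sU1 x(1)] by blast
    then have "y = z" using f_inj y(1) z(2) by (meson inj_onD)
    then show False using nin z by simp
  qed
  have xy: "x + y \<in> U1" using x y sub_add[OF sU1] by blast
  have xy0: "x + y \<noteq> 0"
  proof
    assume "x + y = 0"
    then have "y = vsm (-1) x" by (simp add: vsm_neg eq_neg_iff_add_eq_0 add.commute)
    then show False using nin by (auto simp: point_mem)
  qed
  have lx: "vsm l x \<in> U1" "vsm l y \<in> U1" using sub_smU[OF sU1] x y by auto
  have "vsm (tau (x+y) l) (fm x) + vsm (tau (x+y) l) (fm y) = fm (vsm l (x + y))"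
    using tau_prop[OF xy xy0, of l] f_add[OF x(1) y(1)] by (simp add: vsm_add2)
  also have "\<dots> = vsm (tau x l) (fm x) + vsm (tau y l) (fm y)"
    using f_add[OF lx] tau_prop[OF x, of l] tau_prop[OF y, of l] by (simp add: vsm_add2)
  finally have e: "vsm (tau (x+y) l) (fm x) + vsm (tau (x+y) l) (fm y) = vsm (tau x l) (fm x) + vsm (tau y l) (fm y)" .
  show "tau x l = tau y l" using indep2[OF f_nz[OF x] fnin e] by metis
qed

lemma tau_eq: assumes x: "x \<in> U1" "x \<noteq> 0" and y: "y \<in> U1" "y \<noteq> 0" shows "tau x = tau y"
proof (cases "y \<in> point x")
  case False then show ?thesis using tau_eq1 x y by blast
next
  case True
  have pU: "point x \<subseteq> U1" using point_sub[OF sU1 x(1)] .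
  have "Q^1 < Q^n" using Q4 n2 by (intro power_strict_increasing) auto
  then have "card (point x) < card U1" using card_point[OF x(2)] QF cardU1 by simp
  then have "point x \<noteq> U1" by auto
  then obtain z where z: "z \<in> U1" "z \<notin> point x" using pU by blast
  have z0: "z \<noteq> 0" using z(2) by (metis point_mem vsm_zero1)
  obtain c where c: "y = vsm c x" using True by (auto simp: point_mem)
  have "z \<notin> point y"
  proof
    assume "z \<in> point y"
    then obtain d where "z = vsm d y" by (auto simp: point_mem)
    then have "z = vsm (d * c) x" using c by (simp add: vsm_assoc)
    then show False using z(2) by (auto simp: point_mem)
  qed
  then show ?thesis using tau_eq1[OF x z(1) z0 z(2)] tau_eq1[OF y z(1) z0] by simp
qed

lemma main:
  "\<exists>U1 U2 f \<sigma> \<rho>.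
           U1 \<subseteq> ambient (2*n) \<and> U2 \<subseteq> ambient (2*n) \<and>
           subspace_over UNIV U1 \<and> subspace_over UNIV U2 \<and>
           has_dim UNIV U1 n \<and> has_dim UNIV U2 n \<and>
           U1 \<inter> U2 = {vzero} \<and> {vadd u1 u2 | u1 u2. u1 \<in> U1 \<and> u2 \<in> U2} = ambient (2*n) \<and>
           semilinear_on U1 f \<sigma> \<and> bij_betw f U1 U2 \<and> {x. \<sigma> x = x} = K \<and>
           \<rho> \<noteq> 0 \<and>
           linear_set U = {point (vadd u (vsm \<rho> (f u))) | u. u \<in> U1 \<and> u \<noteq> vzero}"
proof -
  have "Q^1 \<le> Q^n" using Q4 n2 by (intro power_increasing) auto
  then have "card U1 \<noteq> 1" using cardU1 Q4 n2 by simp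
  then have "U1 \<noteq> {0}" by auto
  then obtain x0 where x0: "x0 \<in> U1" "x0 \<noteq> 0" using z1 by blast
  define \<sigma> where "\<sigma> = tau x0"
  have fx0: "fm x0 \<noteq> 0" using f_nz[OF x0] .
  have sl: "fm (vsm c u) = vsm (\<sigma> c) (fm u)" if u: "u \<in> U1" for c u
  proof (cases "u = 0")
    case True then show ?thesis using f0 by simp
  next
    case False then show ?thesis using tau_prop[OF u False] tau_eq[OF x0 u False] by (simp add: \<sigma>_def)
  qed
  have sx: "fm (vsm c x0) = vsm (\<sigma> c) (fm x0)" for c using sl[OF x0(1)] .
  have xU1: "vsm c x0 \<in> U1" for c using sub_smU[OF sU1 x0(1)] .
  have sadd: "\<sigma> (a + b) = \<sigma> a + \<sigma> b" for a b
  proof -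
    have "vsm (\<sigma> (a + b)) (fm x0) = fm (vsm (a + b) x0)" using sx by simp
    also have "\<dots> = fm (vsm a x0 + vsm b x0)" by (simp add: vsm_add1)
    also have "\<dots> = vsm (\<sigma> a + \<sigma> b) (fm x0)" using f_add[OF xU1 xU1] sx by (simp add: vsm_add1)
    finally show ?thesis using vsm_cancel fx0 by blast
  qed
  have smul: "\<sigma> (a * b) = \<sigma> a * \<sigma> b" for a b
  proof -
    have "vsm (\<sigma> (a * b)) (fm x0) = fm (vsm (a * b) x0)" using sx by simp
    also have "\<dots> = fm (vsm a (vsm b x0))" by (simp add: vsm_assoc)
    also have "\<dots> = vsm (\<sigma> a * \<sigma> b) (fm x0)" using sl[OF xU1] sx by (simp add: vsm_assoc)
    finally show ?thesis using vsm_cancel fx0 by blast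
  qed
  have sinj: "inj \<sigma>"
  proof (rule injI)
    fix a b assume "\<sigma> a = \<sigma> b"
    then have "fm (vsm a x0) = fm (vsm b x0)" using sx by simp
    then have "vsm a x0 = vsm b x0" using f_inj xU1 by (meson inj_onD)
    then show "a = b" using vsm_cancel x0(2) by blast
  qed
  have fa: "field_automorphism \<sigma>"
  proof -
    have "surj \<sigma>" using finite_UNIV_inj_surj[OF finite_UNIV sinj] .
    then have "bij \<sigma>" using sinj by (simp add: bij_def)
    then show ?thesis unfolding field_automorphism_def using sadd smul by simp
  qed
  have semi: "semilinear_on U1 fm \<sigma>"
    unfolding semilinear_on_def using fa f_add sl by simp
  have fixK: "{x. \<sigma> x = x} = K"
  proof
    show "K \<subseteq> {x. \<sigma> x = x}"
    proof
      fix c assume c: "c \<in> K"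
      have "vsm (\<sigma> c) (fm x0) = vsm c (fm x0)" using sx f_K[OF c x0(1)] by simp
      then show "c \<in> {x. \<sigma> x = x}" using vsm_cancel fx0 by auto
    qed
    show "{x. \<sigma> x = x} \<subseteq> K"
    proof
      fix c assume "c \<in> {x. \<sigma> x = x}"
      then have c: "\<sigma> c = c" by simp
      have "vsm c (x0 + fm x0) = vsm c x0 + fm (vsm c x0)" using sx c by (simp add: vsm_add2)
      also have "\<dots> \<in> U" using F1(2)[OF xU1] .
      finally show "c \<in> K" using scat[OF F1(2)[OF x0(1)] aplusf_nz[OF x0]] by blast
    qed
  qed
  have ls: "linear_set U = {point (vadd u (vsm 1 (fm u))) | u. u \<in> U1 \<and> u \<noteq> vzero}"
  proof
    show "linear_set U \<subseteq> {point (vadd u (vsm 1 (fm u))) | u. u \<in> U1 \<and> u \<noteq> vzero}"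
    proof
      fix P assume "P \<in> linear_set U"
      then obtain u where u: "P = point u" "u \<in> U" "u \<noteq> 0" by (auto simp: linear_set_def)
      then obtain a where a: "a \<in> U1" "u = a + fm a" using F3 by blast
      have "a \<noteq> 0" using a u(3) f0 by auto
      then show "P \<in> {point (vadd u (vsm 1 (fm u))) | u. u \<in> U1 \<and> u \<noteq> vzero}" using a u by auto
    qed
    show "{point (vadd u (vsm 1 (fm u))) | u. u \<in> U1 \<and> u \<noteq> vzero} \<subseteq> linear_set U"
    proof
      fix P assume "P \<in> {point (vadd u (vsm 1 (fm u))) | u. u \<in> U1 \<and> u \<noteq> vzero}"
      then obtain a where a: "a \<in> U1" "a \<noteq> 0" "P = point (a + fm a)" by auto
      then show "P \<in> linear_set U" using F1(2)[OF a(1)] aplusf_nz[OF a(1,2)]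
        by (auto simp: linear_set_def)
    qed
  qed
  have sa: "{vadd u1 u2 | u1 u2. u1 \<in> U1 \<and> u2 \<in> U2} = ambient (2*n)" using sum_amb by simp
  show ?thesis
    apply (rule exI[of _ U1], rule exI[of _ U2], rule exI[of _ fm], rule exI[of _ \<sigma>], rule exI[of _ 1])
    using T1a T2a inter0 sa semi f_bij fixK ls by simp
qed

end

theorem theorem3p12:
  fixes K :: "'a::{field,finite} set" and q t n :: nat and U :: "(nat \<Rightarrow> 'a) set"
  assumes "is_subfield K" and "card K = q" and "card (UNIV :: 'a set) = q ^ t"
    and "n \<ge> 2" and "t \<ge> 2"
    and "pseudoregulus_type K n t U"
  shows "\<exists>U1 U2 f \<sigma> \<rho>.
           U1 \<subseteq> ambient (2*n) \<and> U2 \<subseteq> ambient (2*n) \<and>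
           subspace_over UNIV U1 \<and> subspace_over UNIV U2 \<and>
           has_dim UNIV U1 n \<and> has_dim UNIV U2 n \<and>
           U1 \<inter> U2 = {vzero} \<and> {vadd u1 u2 | u1 u2. u1 \<in> U1 \<and> u2 \<in> U2} = ambient (2*n) \<and>
           semilinear_on U1 f \<sigma> \<and> bij_betw f U1 U2 \<and> {x. \<sigma> x = x} = K \<and>
           \<rho> \<noteq> 0 \<and>
           linear_set U = {point (vadd u (vsm \<rho> (f u))) | u. u \<in> U1 \<and> u \<noteq> vzero}"
proof -
  obtain S where S: "card S = (card K ^ (n*t) - 1) div (card K ^ t - 1)"
    "\<forall>s\<in>S. s \<subseteq> ambient (2*n) \<and> subspace_over UNIV s \<and> has_dim UNIV s 2
                 \<and> has_dim K (s \<inter> U) t"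
    "\<forall>s\<in>S. \<forall>s'\<in>S. s \<noteq> s' \<longrightarrow> s \<inter> s' = {vzero}"
    "card {T. T \<subseteq> ambient (2*n) \<and> subspace_over UNIV T \<and> has_dim UNIV T n \<and>
                 (\<forall>P\<in>linear_set U. \<not> P \<subseteq> T) \<and>
                 (\<forall>s\<in>S. T \<inter> s \<noteq> {vzero})} = 2"
    and U: "U \<subseteq> ambient (2*n)" "subspace_over K U" "has_dim K U (t*n)" "scattered K U"
    using assms(6) unfolding pseudoregulus_type_def by (elim conjE exE) (rule that)
  define PP where "PP = (\<lambda>T. T \<subseteq> ambient (2*n) \<and> subspace_over UNIV T \<and> has_dim UNIV T n \<and>
                 (\<forall>P\<in>linear_set U. \<not> P \<subseteq> T) \<and> (\<forall>s\<in>S. T \<inter> s \<noteq> {vzero}))"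
  have "card {T. PP T} = 2" using S(4) unfolding PP_def .
  then obtain T1 T2 where TT: "{T. PP T} = {T1, T2}" "T1 \<noteq> T2" unfolding card_2_iff by blast
  have "T1 \<in> {T. PP T}" "T2 \<in> {T. PP T}" using TT(1) by simp_all
  then have "PP T1" "PP T2" by simp_all
  then have T: "T1 \<noteq> T2"
    "T1 \<subseteq> ambient (2*n) \<and> subspace_over UNIV T1 \<and> has_dim UNIV T1 n \<and>
                 (\<forall>P\<in>linear_set U. \<not> P \<subseteq> T1) \<and> (\<forall>s\<in>S. T1 \<inter> s \<noteq> {vzero})"
    "T2 \<subseteq> ambient (2*n) \<and> subspace_over UNIV T2 \<and> has_dim UNIV T2 n \<and>
                 (\<forall>P\<in>linear_set U. \<not> P \<subseteq> T2) \<and> (\<forall>s\<in>S. T2 \<inter> s \<noteq> {vzero})"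
    using TT(2) unfolding PP_def by simp_all
  interpret prt K q t n U S T1 T2 "q^t"
    by (rule prt.intro) (use assms S U T in auto)
  show ?thesis by (rule main)
qed

end
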